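(* Let $\langle A;\cdot\rangle$ be a semigroup which is an Abelian algebra. Then $\langle A;\cdot\rangle$ is a Hamiltonian algebra if and only if $\langle A;\cdot\rangle$ is an inflation of a subsemigroup which is a rectangular band of periodic commutative groups, and the product of any two idempotents of $A$ is an idempotent.
   Context: A semigroup $\langle T;\cdot\rangle$ is a rectangular band of semigroups $T_{i\lambda}$ if $\{T_{i\lambda}\mid i\in I,\lambda\in\Lambda\}$ is a partition of $T$ into subsemigroups with $T_{i\lambda}\cdot T_{j\mu}\subseteq T_{i\mu}$ for all $i,j\in I$, $\lambda,\mu\in\Lambda$; it is a rectangular band of periodic commutative groups if each $\langle T_{i\lambda};\cdot\rangle$ is a commutative group all of whose elements have finite order. A semigroup $\langle A;\cdot\rangle$ is an inflation of a subsemigroup $\langle B;\cdot\rangle$ if there is a partition $\{X_b\mid b\in B\}$ of $A$ with $b\in X_b$ and $x\cdot y=a\cdot b$ for all $a,b\in B$, $x\in X_a$, $y\in X_b$. An idempotent is $e$ with $ee=e$. A polynomial operation of an algebra is an operation obtained from a term by substituting elements of the algebra for some of its variables. An algebra is called Abelian if for every polynomial operation $t(x,y_1,\ldots,y_n)$ and all elements $u,v,c_1,\ldots,c_n,d_1,\ldots,d_n$ of the algebra, $t(u,c_1,\ldots,c_n)=t(u,d_1,\ldots,d_n)$ implies $t(v,c_1,\ldots,c_n)=t(v,d_1,\ldots,d_n)$. Subalgebras of a semigroup are its nonempty subsets closed under $\cdot$; an algebra is called Hamiltonian if the universe of every subalgebra is an equivalence class (block) of some congruence of the algebra. *)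

theory Defs
  imports "HOL-Algebra.Group"
begin

text \<open>The semigroup is the whole type 'a with the multiplication of class semigroup_mult.\<close>

text \<open>Terms over the semigroup: variables (indexed by nat) and constants (elements of A).
  Variable 0 plays the role of x, the others of y_1, ..., y_n.\<close>
datatype 'a sterm = SVar nat | SConst 'a | SMul "'a sterm" "'a sterm"

primrec seval :: "(nat \<Rightarrow> 'a::semigroup_mult) \<Rightarrow> 'a sterm \<Rightarrow> 'a" where
  "seval env (SVar i) = env i"
| "seval env (SConst a) = a"
| "seval env (SMul s t) = seval env s * seval env t"

definition abelian_sg :: "'a::semigroup_mult itself \<Rightarrow> bool" where
  "abelian_sg _ \<longleftrightarrow>
     (\<forall>(t::'a sterm) (u::'a) v (c::nat \<Rightarrow> 'a) d.
        seval (c(0 := u)) t = seval (d(0 := u)) t \<longrightarrow>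
        seval (c(0 := v)) t = seval (d(0 := v)) t)"

definition subsg :: "'a::semigroup_mult set \<Rightarrow> bool" where
  "subsg S \<longleftrightarrow> S \<noteq> {} \<and> (\<forall>x\<in>S. \<forall>y\<in>S. x * y \<in> S)"

definition sg_congruence :: "('a::semigroup_mult \<times> 'a) set \<Rightarrow> bool" where
  "sg_congruence \<theta> \<longleftrightarrow> equiv UNIV \<theta> \<and>
     (\<forall>a b c d. (a, b) \<in> \<theta> \<longrightarrow> (c, d) \<in> \<theta> \<longrightarrow> (a * c, b * d) \<in> \<theta>)"

definition hamiltonian_sg :: "'a::semigroup_mult itself \<Rightarrow> bool" where
  "hamiltonian_sg _ \<longleftrightarrow>
     (\<forall>S::'a set. subsg S \<longrightarrow> (\<exists>\<theta>. sg_congruence \<theta> \<and> S \<in> UNIV // \<theta>))"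

definition periodic_comm_group :: "'a::semigroup_mult set \<Rightarrow> bool" where
  "periodic_comm_group S \<longleftrightarrow>
     (\<exists>e. comm_group \<lparr>carrier = S, mult = (*), one = e\<rparr> \<and>
          (\<forall>x\<in>S. \<exists>n::nat. n > 0 \<and>
              x [^]\<^bsub>\<lparr>carrier = S, mult = (*), one = e\<rparr>\<^esub> n = e))"

text \<open>B is a rectangular band of periodic commutative groups T i l (i \<in> I, l \<in> L).
  Index sets are taken inside the carrier type (w.l.o.g., since all parts are nonempty).\<close>
definition rect_band_pcg :: "'a::semigroup_mult set \<Rightarrow> bool" where
  "rect_band_pcg B \<longleftrightarrow>
     (\<exists>(I::'a set) (L::'a set) (T::'a \<Rightarrow> 'a \<Rightarrow> 'a set).
        (\<Union>i\<in>I. \<Union>l\<in>L. T i l) = B \<and>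
        (\<forall>i\<in>I. \<forall>l\<in>L. T i l \<noteq> {}) \<and>
        (\<forall>i\<in>I. \<forall>l\<in>L. \<forall>j\<in>I. \<forall>m\<in>L. (i, l) \<noteq> (j, m) \<longrightarrow> T i l \<inter> T j m = {}) \<and>
        (\<forall>i\<in>I. \<forall>l\<in>L. subsg (T i l) \<and> periodic_comm_group (T i l)) \<and>
        (\<forall>i\<in>I. \<forall>l\<in>L. \<forall>j\<in>I. \<forall>m\<in>L. \<forall>x\<in>T i l. \<forall>y\<in>T j m. x * y \<in> T i m))"

definition inflation_of :: "'a::semigroup_mult set \<Rightarrow> bool" where
  "inflation_of B \<longleftrightarrow> subsg B \<and>
     (\<exists>X::'a \<Rightarrow> 'a set.
        (\<Union>b\<in>B. X b) = UNIV \<and>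
        (\<forall>a\<in>B. \<forall>b\<in>B. a \<noteq> b \<longrightarrow> X a \<inter> X b = {}) \<and>
        (\<forall>b\<in>B. b \<in> X b) \<and>
        (\<forall>a\<in>B. \<forall>b\<in>B. \<forall>x\<in>X a. \<forall>y\<in>X b. x * y = a * b))"

end

theory Submission
  imports Defs
begin


fun spow :: "'a::semigroup_mult \<Rightarrow> nat \<Rightarrow> 'a" where
  "spow x 0 = x"
| "spow x (Suc n) = spow x n * x"

lemma spow_add: "spow x m * spow x n = spow x (m + n + 1)"
  by (induction n) (simp_all add: mult.assoc[symmetric])

lemma spow_comm: "x * spow x n = spow x n * x"
  using spow_add[of x 0 n] by simp

lemma spow_spow: "spow (spow x m) n = spow x (m*n + m + n)"
proof (induction n)
  case 0 then show ?case by simp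
next
  case (Suc n)
  have "spow (spow x m) (Suc n) = spow x (m*n+m+n) * spow x m" using Suc by simp
  also have "\<dots> = spow x (m * Suc n + m + Suc n)" by (simp add: spow_add algebra_simps)
  finally show ?case .
qed

lemma spow_idem: "e * e = e \<Longrightarrow> spow e n = e"
  by (induction n) simp_all

lemma spow_sq: "spow (x*x) m = spow x (2*m+1)"
  using spow_spow[of x 1 m] by (simp add: mult_2)

lemma idem_unique:
  assumes "spow x m * spow x m = spow x m" "spow x n * spow x n = spow x n"
  shows "spow x m = spow x n"
proof -
  have "spow x m = spow (spow x m) n" using spow_idem assms(1) by metis
  also have "\<dots> = spow (spow x n) m" by (simp add: spow_spow algebra_simps)
  also have "\<dots> = spow x n" using spow_idem assms(2) by metis
  finally show ?thesis .
qed

lemma spow_in: "subsg S \<Longrightarrow> x \<in> S \<Longrightarrow> spow x n \<in> S"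
  by (induction n) (auto simp: subsg_def)

lemma per_eq:
  assumes eq: "spow a m = spow a (m+d)" and d: "d > 0"
  shows "\<exists>n. spow a n * spow a n = spow a n"
proof -
  have s1: "spow a (m+j) = spow a (m+d+j)" for j
    by (induction j) (use eq in simp_all)
  have s2: "spow a (m+j) = spow a (m+j+t*d)" for t j
  proof (induction t)
    case 0 then show ?case by simp
  next
    case (Suc t)
    have "spow a (m+j+Suc t*d) = spow a (m + (j+t*d) + d)" by (simp add: algebra_simps)
    also have "\<dots> = spow a (m+(j+t*d))" using s1[of "j+t*d"] by (simp add: algebra_simps)
    finally show ?case using Suc by (simp add: algebra_simps)
  qed
  obtain d' where dd: "d = Suc d'" using d by (cases d) auto
  define j where "j = m*d' + d'"
  define k where "k = m + j"
  have "spow a k * spow a k = spow a (m + j + (m+1)*d)"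
    unfolding k_def j_def dd by (simp add: spow_add algebra_simps)
  also have "\<dots> = spow a k" using s2[of j "m+1"] unfolding k_def by simp
  finally show ?thesis by blast
qed




lemma ab_left:
  fixes u c d v :: "'a::semigroup_mult"
  assumes ab: "abelian_sg TYPE('a)" and h: "u*c = u*d"
  shows "v*c = v*d"
proof -
  let ?t = "SMul (SVar 0) (SVar 1) :: 'a sterm"
  have "seval ((\<lambda>_. c)(0:=u)) ?t = seval ((\<lambda>_. d)(0:=u)) ?t \<longrightarrow>
        seval ((\<lambda>_. c)(0:=v)) ?t = seval ((\<lambda>_. d)(0:=v)) ?t"
    using ab unfolding abelian_sg_def by blast
  then show ?thesis using h by simp
qed

lemma ab_right:
  fixes u c d v :: "'a::semigroup_mult"
  assumes ab: "abelian_sg TYPE('a)" and h: "c*u = d*u"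
  shows "c*v = d*v"
proof -
  let ?t = "SMul (SVar 1) (SVar 0) :: 'a sterm"
  have "seval ((\<lambda>_. c)(0:=u)) ?t = seval ((\<lambda>_. d)(0:=u)) ?t \<longrightarrow>
        seval ((\<lambda>_. c)(0:=v)) ?t = seval ((\<lambda>_. d)(0:=v)) ?t"
    using ab unfolding abelian_sg_def by blast
  then show ?thesis using h by simp
qed

lemma ab_mid:
  fixes u c1 c2 d1 d2 v :: "'a::semigroup_mult"
  assumes ab: "abelian_sg TYPE('a)" and h: "c1*u*c2 = d1*u*d2"
  shows "c1*v*c2 = d1*v*d2"
proof -
  let ?t = "SMul (SMul (SVar 1) (SVar 0)) (SVar 2) :: 'a sterm"
  let ?c = "\<lambda>i::nat. if i = 1 then c1 else c2"
  let ?d = "\<lambda>i::nat. if i = 1 then d1 else d2"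
  have "seval (?c(0:=u)) ?t = seval (?d(0:=u)) ?t \<longrightarrow>
        seval (?c(0:=v)) ?t = seval (?d(0:=v)) ?t"
    using ab unfolding abelian_sg_def by blast
  then show ?thesis using h by simp
qed

lemma ab_K:
  fixes a e b :: "'a::semigroup_mult"
  assumes ab: "abelian_sg TYPE('a)" and e: "e*e = e"
  shows "a*e*b = a*b"
  using ab_right[OF ab, of "a*e" e a b] e by (simp add: mult.assoc)

lemma ab_M:
  fixes a y z b e :: "'a::semigroup_mult"
  assumes ab: "abelian_sg TYPE('a)" and e: "e*e = e"
  shows "a*y*z*b = a*z*y*b"
proof -
  have "(a*y)*e*b = a*e*(y*b)"
    using ab_K[OF ab e, of "a*y" b] ab_K[OF ab e, of a "y*b"] by (simp add: mult.assoc)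
  from ab_mid[OF ab this, of z] show ?thesis by (simp add: mult.assoc)
qed

definition SC :: "'a::semigroup_mult itself \<Rightarrow> bool" where
  "SC _ \<longleftrightarrow> (\<forall>S::'a set. subsg S \<longrightarrow> (\<forall>s\<in>S. \<forall>s'\<in>S. \<forall>p q.
      (p*s\<in>S \<longrightarrow> p*s'\<in>S) \<and> (s*q\<in>S \<longrightarrow> s'*q\<in>S) \<and> (p*s*q\<in>S \<longrightarrow> p*s'*q\<in>S)))"

lemma ham_SC1:
  assumes "hamiltonian_sg TYPE('a::semigroup_mult)" shows "SC TYPE('a)"
  unfolding SC_def
proof (intro allI impI ballI)
  fix S :: "'a set" and s s' p q
  assume sub: "subsg S" and s: "s \<in> S" and s': "s' \<in> S"
  obtain \<theta> where cg: "sg_congruence \<theta>" and q: "S \<in> UNIV // \<theta>"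
    using assms sub unfolding hamiltonian_sg_def by blast
  have eq: "equiv UNIV \<theta>" and cp: "\<And>a b c d. (a,b)\<in>\<theta> \<Longrightarrow> (c,d)\<in>\<theta> \<Longrightarrow> (a*c,b*d)\<in>\<theta>"
    using cg unfolding sg_congruence_def by auto
  have rf: "\<And>a. (a,a)\<in>\<theta>" using eq by (meson UNIV_I equiv_def refl_onD)
  have sy: "\<And>a b. (a,b)\<in>\<theta> \<Longrightarrow> (b,a)\<in>\<theta>" using eq by (meson equiv_def symD)
  have tr: "\<And>a b c. (a,b)\<in>\<theta> \<Longrightarrow> (b,c)\<in>\<theta> \<Longrightarrow> (a,c)\<in>\<theta>" using eq by (meson equiv_def transD)
  obtain x where Sx: "S = \<theta>``{x}" using q by (auto elim: quotientE)
  have mem: "\<And>y. y \<in> S \<longleftrightarrow> (x,y)\<in>\<theta>" using Sx by auto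
  have ss: "(s,s')\<in>\<theta>" using mem s s' sy tr by blast
  have c1: "(p*s,p*s')\<in>\<theta>" using cp[OF rf ss] .
  have c2: "(s*q,s'*q)\<in>\<theta>" using cp[OF ss rf] .
  have c3: "(p*s*q,p*s'*q)\<in>\<theta>" using cp[OF c1 rf] .
  show "(p*s\<in>S \<longrightarrow> p*s'\<in>S) \<and> (s*q\<in>S \<longrightarrow> s'*q\<in>S) \<and> (p*s*q\<in>S \<longrightarrow> p*s'*q\<in>S)"
    using mem c1 c2 c3 tr by blast
qed

lemma ham_SC2:
  assumes "SC TYPE('a::semigroup_mult)" shows "hamiltonian_sg TYPE('a)"
  unfolding hamiltonian_sg_def
proof (intro allI impI)
  fix S :: "'a set" assume sub: "subsg S"
  have H: "\<And>s s' p q. s\<in>S \<Longrightarrow> s'\<in>S \<Longrightarrow>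
      (p*s\<in>S \<longrightarrow> p*s'\<in>S) \<and> (s*q\<in>S \<longrightarrow> s'*q\<in>S) \<and> (p*s*q\<in>S \<longrightarrow> p*s'*q\<in>S)"
    using assms sub unfolding SC_def by blast
  define \<theta> where "\<theta> = {(x,y). \<forall>p q. (x\<in>S \<longleftrightarrow> y\<in>S) \<and> (p*x\<in>S \<longleftrightarrow> p*y\<in>S) \<and>
      (x*q\<in>S \<longleftrightarrow> y*q\<in>S) \<and> (p*x*q\<in>S \<longleftrightarrow> p*y*q\<in>S)}"
  have eqv: "equiv UNIV \<theta>"
    unfolding equiv_def refl_on_def sym_def trans_def \<theta>_def by auto
  have L: "(a*c, b*c) \<in> \<theta>" if "(a,b)\<in>\<theta>" for a b c
  proof -
    have h: "(a\<in>S) = (b\<in>S)" "\<And>p. (p*a\<in>S) = (p*b\<in>S)" "\<And>q. (a*q\<in>S) = (b*q\<in>S)"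
        "\<And>p q. (p*(a*q)\<in>S) = (p*(b*q)\<in>S)"
      using that unfolding \<theta>_def by (auto simp: mult.assoc)
    show ?thesis unfolding \<theta>_def by (simp add: mult.assoc h)
  qed
  have R: "(c*a, c*b) \<in> \<theta>" if "(a,b)\<in>\<theta>" for a b c
  proof -
    have h: "(a\<in>S) = (b\<in>S)" "\<And>p. (p*a\<in>S) = (p*b\<in>S)" "\<And>q. (a*q\<in>S) = (b*q\<in>S)"
        "\<And>p q. (p*a*q\<in>S) = (p*b*q\<in>S)"
      using that unfolding \<theta>_def by (auto simp: mult.assoc)
    show ?thesis unfolding \<theta>_def by (simp add: mult.assoc[symmetric] h)
  qed
  have cong: "sg_congruence \<theta>"
    unfolding sg_congruence_def
  proof (intro conjI eqv allI impI)
    fix a b c d assume "(a,b)\<in>\<theta>" "(c,d)\<in>\<theta>"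
    then have "(a*c,b*c)\<in>\<theta>" "(b*c,b*d)\<in>\<theta>" using L R by auto
    then show "(a*c,b*d)\<in>\<theta>" using eqv by (meson equiv_def transD)
  qed
  obtain s0 where s0: "s0 \<in> S" using sub unfolding subsg_def by auto
  have "S = \<theta>``{s0}"
  proof
    show "S \<subseteq> \<theta>``{s0}"
    proof
      fix y assume y: "y \<in> S"
      have "(s0,y)\<in>\<theta>" unfolding \<theta>_def using H[OF s0 y] H[OF y s0] s0 y by blast
      then show "y \<in> \<theta>``{s0}" by auto
    qed
    show "\<theta>``{s0} \<subseteq> S" using s0 unfolding \<theta>_def by auto
  qed
  then have "S \<in> UNIV // \<theta>" by (auto intro: quotientI)
  with cong show "\<exists>\<theta>. sg_congruence \<theta> \<and> S \<in> UNIV // \<theta>" by blast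
qed




lemma per_SC:
  assumes "SC TYPE('a::semigroup_mult)" shows "\<exists>n. spow (a::'a) n * spow a n = spow a n"
proof -
  define S where "S = {spow a k | k. k = 2 \<or> k \<ge> 4}"
  have sub: "subsg S" unfolding subsg_def
  proof (intro conjI ballI)
    show "S \<noteq> {}" unfolding S_def by auto
    fix x y assume "x \<in> S" "y \<in> S"
    then obtain i j where "x = spow a i" "y = spow a j" "i = 2 \<or> i \<ge> 4" "j = 2 \<or> j \<ge> 4"
      unfolding S_def by auto
    then have "x * y = spow a (i+j+1)" "i+j+1 \<ge> 4" using spow_add by auto
    then show "x * y \<in> S" unfolding S_def by blast
  qed
  have s: "spow a 4 \<in> S" and s': "spow a 2 \<in> S" unfolding S_def by auto
  have ps: "a * spow a 4 \<in> S" unfolding S_def spow_comm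
    by (auto intro!: exI[of _ 5] simp: numeral_eq_Suc)
  have "a * spow a 2 \<in> S" using assms sub s s' ps unfolding SC_def by blast
  then obtain k where k: "spow a 3 = spow a k" "k = 2 \<or> k \<ge> 4"
    unfolding S_def spow_comm by (auto simp: numeral_eq_Suc)
  show ?thesis
  proof (cases "k = 2")
    case True
    then have "spow a 2 = spow a (2+1)" using k by simp
    then show ?thesis using per_eq[of a 2 1] by simp
  next
    case False
    then have "k \<ge> 4" using k by auto
    then have "spow a 3 = spow a (3 + (k-3))" using k by simp
    then show ?thesis using per_eq[of a 3 "k-3"] \<open>k\<ge>4\<close> by auto
  qed
qed

lemma per1:
  assumes "\<exists>n. spow (x::'a::semigroup_mult) n * spow x n = spow x n"
  shows "\<exists>n. spow x (Suc n) * spow x (Suc n) = spow x (Suc n)"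
proof -
  obtain n where n: "spow x n * spow x n = spow x n" using assms by blast
  have "spow x (Suc (2*n)) = spow x n" using n spow_add[of x n n] by (simp add: mult_2)
  then show ?thesis using n by metis
qed

lemma SC_from:
  fixes dummy :: "'a::semigroup_mult itself"
  assumes per: "\<And>x::'a. \<exists>n. spow x n * spow x n = spow x n"
    and K: "\<And>a e b::'a. e*e = e \<Longrightarrow> a*e*b = a*b"
    and M: "\<And>a y z b::'a. a*y*z*b = a*z*y*b"
  shows "SC TYPE('a)"
  unfolding SC_def
proof (intro allI impI ballI conjI)
  fix S :: "'a set" and s s' p q
  assume sub: "subsg S" and s: "s \<in> S" and s': "s' \<in> S"
  have cl: "\<And>x y. x\<in>S \<Longrightarrow> y\<in>S \<Longrightarrow> x*y\<in>S" using sub unfolding subsg_def by auto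
  obtain n where n: "spow s (Suc n) * spow s (Suc n) = spow s (Suc n)" using per1 per by blast
  define W where "W = spow s n"
  have EW: "spow s (Suc n) = s * W" unfolding W_def by (simp add: spow_comm)
  have EW2: "spow s (Suc n) = W * s" unfolding W_def by simp
  have Wi: "W \<in> S" unfolding W_def using spow_in sub s by blast
  have Eid: "(s*W)*(s*W) = s*W" using n EW by simp
  have Eid2: "(W*s)*(W*s) = W*s" using n EW2 by simp
  show "p*s\<in>S \<Longrightarrow> p*s'\<in>S"
  proof -
    assume ps: "p*s\<in>S"
    have "p*s' = p*(s*W)*s'" using K[OF Eid] by simp
    also have "\<dots> = (p*s)*(W*s')" by (simp add: mult.assoc)
    finally show ?thesis using ps cl Wi s' by simp
  qed
  show "s*q\<in>S \<Longrightarrow> s'*q\<in>S"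
  proof -
    assume sq: "s*q\<in>S"
    have "s'*q = s'*(W*s)*q" using K[OF Eid2] by simp
    also have "\<dots> = (s'*W)*(s*q)" by (simp add: mult.assoc)
    finally show ?thesis using sq cl Wi s' by simp
  qed
  show "p*s*q\<in>S \<Longrightarrow> p*s'*q\<in>S"
  proof -
    assume t: "p*s*q\<in>S"
    define t where "t = p*s*q"
    obtain k where k: "spow t (Suc k) * spow t (Suc k) = spow t (Suc k)" using per1 per by blast
    define V where "V = spow t k"
    have FV: "spow t (Suc k) = V * t" unfolding V_def by simp
    have Vi: "V \<in> S" unfolding V_def using spow_in sub t t_def by blast
    have Fid: "(V*t)*(V*t) = V*t" using k FV by simp
    define R where "R = V*p*s"
    have "p*s'*q = p*s'*(s*W)*q" using K[OF Eid, of "p*s'" q] by simp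
    also have "\<dots> = p*s'*(s*W)*(V*t)*q" using K[OF Fid, of "p*s'*(s*W)" q] by simp
    also have "\<dots> = p*s'*s*W*R*q*q" unfolding R_def t_def by (simp add: mult.assoc)
    also have "\<dots> = p*s*s'*W*R*q*q" using M[of p s' s "W*R*q*q"] by (simp add: mult.assoc)
    also have "\<dots> = p*s*s'*W*q*R*q" using M[of "p*s*s'*W" R q q] by (simp add: mult.assoc)
    also have "\<dots> = p*s*s'*q*W*R*q" using M[of "p*s*s'" W q "R*q"] by (simp add: mult.assoc)
    also have "\<dots> = p*s*q*s'*W*R*q" using M[of "p*s" s' q "W*R*q"] by (simp add: mult.assoc)
    also have "\<dots> = t*(s'*W)*(V*t)" unfolding R_def t_def by (simp add: mult.assoc)
    finally have eq: "p*s'*q = t*(s'*W)*(V*t)" .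
    show ?thesis unfolding eq using cl t t_def Vi Wi s' by simp
  qed
qed




definition Eid :: "'a::semigroup_mult \<Rightarrow> 'a" where
  "Eid x = spow x (SOME n. spow x n * spow x n = spow x n)"

lemma gpow_spow:
  assumes "\<And>y. y \<in> T \<Longrightarrow> w * y = y" "x \<in> T"
  shows "x [^]\<^bsub>\<lparr>carrier = T, mult = (*), one = w\<rparr>\<^esub> (Suc n) = spow x n"
  by (induction n) (use assms in simp_all)

context
  fixes dummy :: "'a::semigroup_mult itself"
  assumes per: "\<And>x::'a. \<exists>n. spow x n * spow x n = spow x n"
  and K: "\<And>a e b::'a. e*e=e \<Longrightarrow> a*e*b = a*b"
  and M: "\<And>a y z b::'a. a*y*z*b = a*z*y*b"
  and AL: "\<And>u c d v::'a. u*c = u*d \<Longrightarrow> v*c = v*d"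
  and AR: "\<And>u c d v::'a. c*u = d*u \<Longrightarrow> c*v = d*v"
begin

lemma E_idem: "Eid (x::'a) * Eid x = Eid x"
  unfolding Eid_def using someI_ex[OF per[of x]] .

lemma E_comm: "Eid (x::'a) * x = x * Eid x"
  unfolding Eid_def by (simp add: spow_comm)

lemma E_eq: "spow (x::'a) n * spow x n = spow x n \<Longrightarrow> Eid x = spow x n"
  using idem_unique E_idem unfolding Eid_def by blast

lemma E_idempt: "(e::'a) * e = e \<Longrightarrow> Eid e = e"
  using E_eq[of e 0] by simp

lemma idem_mult: "(e::'a)*e = e \<Longrightarrow> f*f = f \<Longrightarrow> (e*f)*(e*f) = e*f"
  using K[of e "e*f" f] by (simp add: mult.assoc)

lemma spow_distrib: "spow ((a::'a)*b) n = spow a n * spow b n"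
proof (induction n)
  case 0 then show ?case by simp
next
  case (Suc n)
  have "spow (a*b) (Suc n) = spow a n * spow b n * a * b" using Suc by (simp add: mult.assoc)
  also have "\<dots> = spow a n * a * spow b n * b" using M by blast
  finally show ?case by (simp add: mult.assoc)
qed

lemma E_mult: "Eid ((a::'a)*b) = Eid a * Eid b"
proof -
  define n1 where "n1 = (SOME n. spow a n * spow a n = spow a n)"
  define n2 where "n2 = (SOME n. spow b n * spow b n = spow b n)"
  have a1: "Eid a = spow a n1" unfolding Eid_def n1_def ..
  have b1: "Eid b = spow b n2" unfolding Eid_def n2_def ..
  define k where "k = n1*n2+n1+n2"
  have "spow a k = spow (spow a n1) n2" unfolding k_def by (simp add: spow_spow)
  also have "\<dots> = Eid a" using a1 E_idem spow_idem by metis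
  finally have ak: "spow a k = Eid a" .
  have "spow b k = spow (spow b n2) n1" unfolding k_def by (simp add: spow_spow algebra_simps)
  also have "\<dots> = Eid b" using b1 E_idem spow_idem by metis
  finally have bk: "spow b k = Eid b" .
  have "spow (a*b) k = Eid a * Eid b" using spow_distrib ak bk by simp
  moreover have "(Eid a * Eid b) * (Eid a * Eid b) = Eid a * Eid b"
    using idem_mult E_idem by blast
  ultimately show ?thesis using E_eq by metis
qed

definition pi :: "'a \<Rightarrow> 'a" where "pi x = x * Eid x"
definition BB :: "'a set" where "BB = {b. b * Eid b = b}"

lemma pi_prod: "(x::'a)*y = pi x * pi y"
proof -
  have "Eid y * y = Eid y * (y * Eid y)"
    by (metis E_comm E_idem mult.assoc)
  then have 1: "v*y = v*(y*Eid y)" for v using AL by blast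
  have "x * Eid x = (x*Eid x)*Eid x" by (simp add: mult.assoc E_idem)
  then have 2: "x*v = (x*Eid x)*v" for v using AR by blast
  show ?thesis unfolding pi_def using 1 2 by metis
qed

lemma pi_B: "pi (x::'a) \<in> BB"
proof -
  have "Eid (pi x) = Eid x" unfolding pi_def E_mult using E_idempt E_idem by simp
  then show ?thesis unfolding BB_def by (simp add: pi_def mult.assoc E_idem)
qed

lemma BB_mul: "(a::'a)*b \<in> BB"
proof -
  have "pi a * pi b \<in> BB" if "a \<in> BB" "b \<in> BB" for a b :: 'a
  proof -
    have "(a*b)*Eid (a*b) = (a*b)*Eid a*Eid b" by (simp add: E_mult mult.assoc)
    also have "\<dots> = a*(b*Eid b)" using K E_idem by (simp add: mult.assoc)
    finally show ?thesis using that unfolding BB_def pi_def by simp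
  qed
  then show ?thesis using pi_B pi_prod by metis
qed

lemma Tw_group:
  fixes w :: 'a
  assumes w: "w*w = w"
  defines "Tw \<equiv> {b \<in> BB. Eid b = w}"
  shows "subsg Tw \<and> periodic_comm_group Tw"
proof -
  have wT: "w \<in> Tw" unfolding Tw_def BB_def using w E_idempt[OF w] by simp
  have cl: "a*b \<in> Tw" if "a\<in>Tw" "b\<in>Tw" for a b
    using that BB_mul E_mult w unfolding Tw_def by auto
  have lo: "w*b = b" "b*w = b" if "b\<in>Tw" for b
    using that E_comm[of b] unfolding Tw_def BB_def by auto
  have pw: "spow b n \<in> Tw" if "b \<in> Tw" for b n
    using that by (induction n) (simp_all add: cl)
  have inv: "\<exists>y\<in>Tw. y*b = w" if b: "b\<in>Tw" for b
  proof -
    define n0 where "n0 = (SOME n. spow b n * spow b n = spow b n)"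
    have e: "Eid b = spow b n0" unfolding Eid_def n0_def ..
    have "spow b (2*n0) * b = spow b n0 * spow b n0" using spow_add[of b n0 n0] by (simp add: mult_2)
    also have "\<dots> = w" using e E_idem[of b] b unfolding Tw_def by simp
    finally show ?thesis using pw[OF b] by blast
  qed
  have cm: "a*b = b*a" if "a\<in>Tw" "b\<in>Tw" for a b
  proof -
    have "a*b = w*a*b*w" using lo that by (simp add: mult.assoc)
    also have "\<dots> = w*b*a*w" using M by blast
    also have "\<dots> = b*a" using lo that by (simp add: mult.assoc)
    finally show ?thesis .
  qed
  have G: "comm_group \<lparr>carrier = Tw, mult = (*), one = w\<rparr>"
    by (rule comm_groupI) (auto simp: cl wT mult.assoc lo inv intro: cm)
  have P: "\<exists>n::nat. n > 0 \<and> x [^]\<^bsub>\<lparr>carrier = Tw, mult = (*), one = w\<rparr>\<^esub> n = w" if x: "x \<in> Tw" for x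
  proof -
    define n0 where "n0 = (SOME n. spow x n * spow x n = spow x n)"
    have e: "Eid x = spow x n0" unfolding Eid_def n0_def ..
    have "x [^]\<^bsub>\<lparr>carrier = Tw, mult = (*), one = w\<rparr>\<^esub> (Suc n0) = spow x n0"
      using gpow_spow[of Tw w x n0] lo x by blast
    also have "\<dots> = w" using e x unfolding Tw_def by simp
    finally show ?thesis by blast
  qed
  have "subsg Tw" unfolding subsg_def using wT cl by auto
  moreover have "periodic_comm_group Tw" unfolding periodic_comm_group_def using G P by blast
  ultimately show ?thesis ..
qed


lemma structure_ex: "\<exists>B::'a set. subsg B \<and> inflation_of B \<and> rect_band_pcg B"
proof (intro exI conjI)
  show sB: "subsg BB" unfolding subsg_def using pi_B BB_mul by blast
  have piB: "pi b = b" if "b \<in> BB" for b using that unfolding BB_def pi_def by simp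
  show "inflation_of BB" unfolding inflation_of_def
  proof (intro conjI sB exI[of _ "\<lambda>b. {x. pi x = b}"])
    show "(\<Union>b\<in>BB. {x. pi x = b}) = UNIV" using pi_B by blast
    show "\<forall>a\<in>BB. \<forall>b\<in>BB. a \<noteq> b \<longrightarrow> {x. pi x = a} \<inter> {x. pi x = b} = {}" by auto
    show "\<forall>b\<in>BB. b \<in> {x. pi x = b}" using piB by auto
    show "\<forall>a\<in>BB. \<forall>b\<in>BB. \<forall>x\<in>{x. pi x = a}. \<forall>y\<in>{x. pi x = b}. x * y = a * b"
      using pi_prod by auto
  qed
  define e0 :: 'a where "e0 = Eid undefined"
  have e0: "e0*e0 = e0" unfolding e0_def using E_idem .
  have e0': "\<And>x. e0*(e0*x) = e0*x" using e0 by (simp add: mult.assoc[symmetric])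
  define I where "I = {f*e0 | f. f*f = f}"
  define L where "L = {e0*f | f. f*f = f}"
  define T where "T = (\<lambda>i l. {b \<in> BB. Eid b = i*l})"
  have Iid: "i*i = i" if "i \<in> I" for i using that idem_mult e0 unfolding I_def by auto
  have Lid: "l*l = l" if "l \<in> L" for l using that idem_mult e0 unfolding L_def by auto
  have ilid: "(i*l)*(i*l) = i*l" if "i \<in> I" "l \<in> L" for i l using that Iid Lid idem_mult by blast
  have r1: "i*l*e0 = i" if A: "i \<in> I" "l \<in> L" for i l
  proof -
    obtain f g where fg: "i = f*e0" "l = e0*g" "f*f=f" "g*g=g" using A unfolding I_def L_def by auto
    have eg: "(e0*g)*(e0*g) = e0*g" using idem_mult e0 fg by blast
    have "i*l*e0 = f*(e0*g)*e0" using fg e0' by (simp add: mult.assoc)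
    also have "\<dots> = f*e0" using K[OF eg] .
    finally show ?thesis using fg by simp
  qed
  have r2: "e0*(i*l) = l" if A: "i \<in> I" "l \<in> L" for i l
  proof -
    obtain f g where fg: "i = f*e0" "l = e0*g" "f*f=f" "g*g=g" using A unfolding I_def L_def by auto
    have fe: "(f*e0)*(f*e0) = f*e0" using idem_mult e0 fg by blast
    have "e0*(i*l) = e0*(f*e0)*g" using fg e0' by (simp add: mult.assoc)
    also have "\<dots> = e0*g" using K[OF fe] .
    finally show ?thesis using fg by simp
  qed
  have U: "(\<Union>i\<in>I. \<Union>l\<in>L. T i l) = BB"
  proof
    show "(\<Union>i\<in>I. \<Union>l\<in>L. T i l) \<subseteq> BB" unfolding T_def by auto
    show "BB \<subseteq> (\<Union>i\<in>I. \<Union>l\<in>L. T i l)"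
    proof
      fix b assume b: "b \<in> BB"
      define f where "f = Eid b"
      have f: "f*f = f" unfolding f_def using E_idem .
      have "f*e0*(e0*f) = f*e0*f" using e0' by (simp add: mult.assoc)
      also have "\<dots> = f" using K[OF e0, of f f] f by simp
      finally have "b \<in> T (f*e0) (e0*f)" unfolding T_def using b f_def by simp
      moreover have "f*e0 \<in> I" "e0*f \<in> L" unfolding I_def L_def using f by auto
      ultimately show "b \<in> (\<Union>i\<in>I. \<Union>l\<in>L. T i l)" by blast
    qed
  qed
  have NE: "T i l \<noteq> {}" if il: "i \<in> I" "l \<in> L" for i l
  proof -
    have "i*l \<in> T i l" unfolding T_def BB_def using ilid[OF il] E_idempt[OF ilid[OF il]] by simp
    then show ?thesis by blast
  qed
  have GR: "subsg (T i l) \<and> periodic_comm_group (T i l)" if il: "i \<in> I" "l \<in> L" for i l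
    using Tw_group[OF ilid[OF il]] unfolding T_def by auto
  have DJ: "T i l \<inter> T j m = {}" if il: "i \<in> I" "l \<in> L" and jm: "j \<in> I" "m \<in> L"
    and ne: "(i,l) \<noteq> (j,m)" for i l j m
  proof (rule ccontr)
    assume "T i l \<inter> T j m \<noteq> {}"
    then have "i*l = j*m" unfolding T_def by auto
    then have "i = j" "l = m" using r1[OF il] r1[OF jm] r2[OF il] r2[OF jm] by metis+
    then show False using ne by simp
  qed
  have PR: "x*y \<in> T i m" if il: "i \<in> I" "l \<in> L" and jm: "j \<in> I" "m \<in> L"
    and x: "x \<in> T i l" and y: "y \<in> T j m" for i l j m x y
  proof -
    have "Eid (x*y) = i*l*(j*m)" using x y E_mult unfolding T_def by simp
    also have "\<dots> = i*(l*j)*m" by (simp add: mult.assoc)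
    also have "\<dots> = i*m" using K[OF idem_mult[OF Lid[OF il(2)] Iid[OF jm(1)]]] .
    finally show "x*y \<in> T i m" unfolding T_def using BB_mul by simp
  qed
  show "rect_band_pcg BB" unfolding rect_band_pcg_def
    apply (rule exI[of _ I], rule exI[of _ L], rule exI[of _ T])
    apply (intro conjI)
    subgoal using U .
    subgoal using NE by blast
    subgoal using DJ by blast
    subgoal using GR by blast
    subgoal using PR by blast
    done
qed

end




lemma per_struct:
  assumes inf: "inflation_of (B::'a::semigroup_mult set)" and rb: "rect_band_pcg B"
  shows "\<exists>n. spow (x::'a) n * spow x n = spow x n"
proof -
  have sB: "subsg B" using inf unfolding inflation_of_def by (elim conjE)
  have "\<exists>X. (\<Union>b\<in>B. X b) = UNIV \<and> (\<forall>a\<in>B. \<forall>b\<in>B. \<forall>x\<in>X a. \<forall>y\<in>X b. x * y = a * b)"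
    using inf unfolding inflation_of_def by (elim conjE exE) (intro exI conjI; assumption)
  then obtain X where X: "(\<Union>b\<in>B. X b) = UNIV" "\<forall>a\<in>B. \<forall>b\<in>B. \<forall>x\<in>X a. \<forall>y\<in>X b. x * y = a * b"
    by (elim conjE exE)
  have "x \<in> (\<Union>b\<in>B. X b)" using X(1) by simp
  then obtain a where a: "a \<in> B" "x \<in> X a" by (elim UN_E)
  have xx: "x*x = a*a" using X(2)[rule_format, OF a(1) a(1) a(2) a(2)] .
  have aa: "a*a \<in> B" using sB a unfolding subsg_def by blast
  have "\<exists>(I::'a set) (L::'a set) T. (\<Union>i\<in>I. \<Union>l\<in>L. T i l) = B \<and> (\<forall>i\<in>I. \<forall>l\<in>L. subsg (T i l) \<and> periodic_comm_group (T i l))"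
    using rb unfolding rect_band_pcg_def by (elim conjE exE) (rule exI, rule exI, rule exI, rule conjI, assumption, assumption)
  then obtain I L :: "'a set" and T where U: "(\<Union>i\<in>I. \<Union>l\<in>L. T i l) = B"
    and G: "\<forall>i\<in>I. \<forall>l\<in>L. subsg (T i l) \<and> periodic_comm_group (T i l)"
    by blast
  have "a*a \<in> (\<Union>i\<in>I. \<Union>l\<in>L. T i l)" using U aa by simp
  then obtain i l where il: "i \<in> I" "l \<in> L" "a*a \<in> T i l" by (elim UN_E)
  have "periodic_comm_group (T i l)" using G il(1,2) by simp
  then obtain e where cg: "comm_group \<lparr>carrier = T i l, mult = (*), one = e\<rparr>"
    and P: "\<forall>x\<in>T i l. \<exists>n::nat. n > 0 \<and> x [^]\<^bsub>\<lparr>carrier = T i l, mult = (*), one = e\<rparr>\<^esub> n = e"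
    unfolding periodic_comm_group_def by (elim conjE exE)
  have mon: "monoid \<lparr>carrier = T i l, mult = (*), one = e\<rparr>"
    using cg by (simp add: comm_group_def group_def comm_monoid_def)
  have lo: "\<And>y. y \<in> T i l \<Longrightarrow> e * y = y" using monoid.l_one[OF mon] by simp
  have ee: "e * e = e" using lo monoid.one_closed[OF mon] by simp
  obtain n :: nat where n: "n > 0" "(a*a) [^]\<^bsub>\<lparr>carrier = T i l, mult = (*), one = e\<rparr>\<^esub> n = e"
    using P il(3) by blast
  obtain m where m: "n = Suc m" using n by (cases n) auto
  have "spow (a*a) m = e" using gpow_spow[of "T i l" e "a*a" m, OF lo il(3)] n m by simp
  then have "spow x (2*m+1) = e" using xx spow_sq by metis
  then show ?thesis using ee by metis
qed

theorem mainTheorem19: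
  assumes "abelian_sg TYPE('a::semigroup_mult)"
  shows "hamiltonian_sg TYPE('a) \<longleftrightarrow>
           ((\<exists>B::'a set. subsg B \<and> inflation_of B \<and> rect_band_pcg B) \<and>
            (\<forall>e f::'a. e * e = e \<longrightarrow> f * f = f \<longrightarrow> (e * f) * (e * f) = e * f))"
proof -
  note ab = assms
  have K: "\<And>a e b::'a. e*e=e \<Longrightarrow> a*e*b = a*b" using ab_K[OF ab] by blast
  have AL: "\<And>u c d v::'a. u*c = u*d \<Longrightarrow> v*c = v*d" using ab_left[OF ab] by blast
  have AR: "\<And>u c d v::'a. c*u = d*u \<Longrightarrow> c*v = d*v" using ab_right[OF ab] by blast
  have IC: "\<forall>e f::'a. e * e = e \<longrightarrow> f * f = f \<longrightarrow> (e * f) * (e * f) = e * f"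
  proof (intro allI impI)
    fix e f :: 'a assume e: "e*e = e" and f: "f*f = f"
    have "(e*f)*(e*f) = (e*f)*e*f" by (simp add: mult.assoc)
    also have "\<dots> = (e*f)*f" using K[OF e] .
    also have "\<dots> = e*f" using f by (simp add: mult.assoc)
    finally show "(e*f)*(e*f) = e*f" .
  qed
  have MM: "\<And>a y z b::'a. a*y*z*b = a*z*y*b" if per: "\<And>x::'a. \<exists>n. spow x n * spow x n = spow x n"
  proof -
    obtain n where "spow (undefined::'a) n * spow undefined n = spow undefined n" using per by blast
    then show "\<And>a y z b::'a. a*y*z*b = a*z*y*b" using ab_M[OF ab] by blast
  qed
  show ?thesis
  proof
    assume H: "hamiltonian_sg TYPE('a)"
    have per: "\<And>x::'a. \<exists>n. spow x n * spow x n = spow x n" using per_SC ham_SC1[OF H] by blast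
    have "\<exists>B::'a set. subsg B \<and> inflation_of B \<and> rect_band_pcg B"
      using structure_ex[OF per K MM[OF per] AL AR] .
    then show "(\<exists>B::'a set. subsg B \<and> inflation_of B \<and> rect_band_pcg B) \<and>
            (\<forall>e f::'a. e * e = e \<longrightarrow> f * f = f \<longrightarrow> (e * f) * (e * f) = e * f)" using IC by blast
  next
    assume "(\<exists>B::'a set. subsg B \<and> inflation_of B \<and> rect_band_pcg B) \<and>
            (\<forall>e f::'a. e * e = e \<longrightarrow> f * f = f \<longrightarrow> (e * f) * (e * f) = e * f)"
    then obtain B :: "'a set" where "inflation_of B" "rect_band_pcg B" by blast
    then have per: "\<And>x::'a. \<exists>n. spow x n * spow x n = spow x n" using per_struct by blast
    show "hamiltonian_sg TYPE('a)"
      using ham_SC2 SC_from[OF per K MM[OF per]] by blast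
  qed
qed


end
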